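(* Let $N\ge1$, $\sigma>0$, let $\psi:[0,2]\to[0,+\infty)$ be a decreasing $C^1$ function with $\psi(2)=0$ and $\psi'(2)<0$, and let $(x_i,v_i)_{i=1}^N$ be the solution of $$\dot x_i=v_i,\qquad \dot v_i=-\frac{\|v_i\|^2}{\|x_i\|^2}x_i+\sum_{j=1}^N\frac{\psi_{ij}}{N}\big(R(x_j,x_i)v_j-v_i\big)+\sum_{k=1}^N\frac{\sigma}{N}\big(\|x_i\|^2x_k-\langle x_i,x_k\rangle x_i\big),\quad \psi_{ij}=\psi(\|x_i-x_j\|),$$ with initial data satisfying $\|x_i(0)\|=1$, $\langle v_i(0),x_i(0)\rangle=0$ for all $i$. If $2\sigma>N^2\mathcal{E}(0)$, then $\frac{d}{dt}v_i$ and $\frac{d}{dt}\big(R(x_j,x_i)v_j\big)$ are bounded on $[0,\infty)$ for all $i,j\in\{1,\dots,N\}$.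
   Context: $\|\cdot\|$ is the Euclidean norm, $\langle\cdot,\cdot\rangle$ the inner product on $\mathbb{R}^3$. For column vectors $x_1,x_2$ in the unit sphere with $x_1\ne-x_2$, $R(x_1,x_2)=I$ if $x_1=x_2$, and otherwise $R(x_1,x_2)=\langle x_1,x_2\rangle I-x_1x_2^T+x_2x_1^T+(1-\langle x_1,x_2\rangle)uu^T$, $u=\frac{x_1\times x_2}{\|x_1\times x_2\|}$; $\psi_{ij}R(x_j,x_i)v_j:=0$ when $x_j=-x_i$. The energy is $\mathcal{E}=\frac1N\sum_{k=1}^N\|v_k\|^2+\frac{\sigma}{2N^2}\sum_{k,l=1}^N\|x_k-x_l\|^2$. *)

theory Defs
  imports "HOL-Analysis.Analysis" "HOL-Analysis.Cross3"
begin

definition outer3 :: "real^3 \<Rightarrow> real^3 \<Rightarrow> real^3^3" where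
  "outer3 x y = (\<chi> a b. x $ a * y $ b)"

definition Rot :: "real^3 \<Rightarrow> real^3 \<Rightarrow> real^3^3" where
  "Rot x1 x2 = (if x1 = x2 then mat 1 else
     (let u = (1 / norm (cross3 x1 x2)) *\<^sub>R cross3 x1 x2 in
       (x1 \<bullet> x2) *\<^sub>R mat 1 - outer3 x1 x2 + outer3 x2 x1
       + (1 - x1 \<bullet> x2) *\<^sub>R outer3 u u))"

definition psiR :: "(real \<Rightarrow> real) \<Rightarrow> real^3 \<Rightarrow> real^3 \<Rightarrow> real^3 \<Rightarrow> real^3" where
  "psiR \<psi> xi xj vj = (if xj = - xi then 0 else \<psi> (norm (xi - xj)) *\<^sub>R (Rot xj xi *v vj))"

text \<open>Right-hand side of the velocity equation for particle i (particles indexed by 0..<N).\<close>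
definition vrhs :: "nat \<Rightarrow> real \<Rightarrow> (real \<Rightarrow> real) \<Rightarrow> (nat \<Rightarrow> real^3) \<Rightarrow> (nat \<Rightarrow> real^3) \<Rightarrow> nat \<Rightarrow> real^3" where
  "vrhs N \<sigma> \<psi> x v i =
     - ((norm (v i))\<^sup>2 / (norm (x i))\<^sup>2) *\<^sub>R x i
     + (\<Sum>j<N. (1 / real N) *\<^sub>R (psiR \<psi> (x i) (x j) (v j) - \<psi> (norm (x i - x j)) *\<^sub>R v i))
     + (\<Sum>k<N. (\<sigma> / real N) *\<^sub>R ((norm (x i))\<^sup>2 *\<^sub>R x k - (x i \<bullet> x k) *\<^sub>R x i))"

definition energy :: "nat \<Rightarrow> real \<Rightarrow> (nat \<Rightarrow> real^3) \<Rightarrow> (nat \<Rightarrow> real^3) \<Rightarrow> real" where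
  "energy N \<sigma> x v = (1 / real N) * (\<Sum>k<N. (norm (v k))\<^sup>2)
     + \<sigma> / (2 * (real N)\<^sup>2) * (\<Sum>k<N. \<Sum>l<N. (norm (x k - x l))\<^sup>2)"

end

theory Submission
  imports Defs
begin

lemma outer3_mult: "outer3 x y *v v = (y \<bullet> v) *\<^sub>R x"
  by (simp add: outer3_def matrix_vector_mult_def vec_eq_iff inner_vec_def sum_3 algebra_simps)

lemma rot_apply: "Rot x1 x2 *v v = (if x1 = x2 then v else
   (x1 \<bullet> x2) *\<^sub>R v - (x2 \<bullet> v) *\<^sub>R x1 + (x1 \<bullet> v) *\<^sub>R x2
   + ((1 - x1 \<bullet> x2) * (cross3 x1 x2 \<bullet> v) / (norm (cross3 x1 x2))\<^sup>2) *\<^sub>R cross3 x1 x2)"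
  by (simp add: Rot_def Let_def matrix_vector_mult_add_rdistrib matrix_vector_mult_diff_rdistrib
       scaleR_matrix_vector_assoc[symmetric] outer3_mult power2_eq_square)

lemma normsq_cross: "(norm (cross3 x y))\<^sup>2 = (norm x)\<^sup>2 * (norm y)\<^sup>2 - (x \<bullet> y)\<^sup>2"
  using norm_cross_dot[of x y] by (simp add: power_mult_distrib)

lemma gram: "(cross3 x y \<bullet> v)\<^sup>2 = (x\<bullet>x)*(y\<bullet>y)*(v\<bullet>v) + 2*(x\<bullet>y)*(y\<bullet>v)*(x\<bullet>v)
   - (x\<bullet>x)*(y\<bullet>v)\<^sup>2 - (y\<bullet>y)*(x\<bullet>v)\<^sup>2 - (v\<bullet>v)*(x\<bullet>y)\<^sup>2"
  by (simp add: cross3_simps power2_eq_square)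

definition Fr :: "real^3 \<Rightarrow> real^3 \<Rightarrow> real^3 \<Rightarrow> real^3" where
  "Fr x1 x2 v = (x1 \<bullet> x2) *\<^sub>R v - (x2 \<bullet> v) *\<^sub>R x1 + (x1 \<bullet> v) *\<^sub>R x2
     + ((cross3 x1 x2 \<bullet> v) / (1 + x1 \<bullet> x2)) *\<^sub>R cross3 x1 x2"

lemma unit_dist: "norm x1 = 1 \<Longrightarrow> norm x2 = 1 \<Longrightarrow> (norm (x1 - x2))\<^sup>2 = 2 - 2 * (x1 \<bullet> x2)"
proof -
  assume "norm x1 = 1" "norm x2 = 1"
  then have "x1 \<bullet> x1 = 1" "x2 \<bullet> x2 = 1" by (simp_all add: dot_square_norm)
  then show ?thesis by (simp add: power2_norm_eq_inner inner_diff_left inner_diff_right inner_commute)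
qed

lemma unit_sum: "norm x1 = 1 \<Longrightarrow> norm x2 = 1 \<Longrightarrow> (norm (x1 + x2))\<^sup>2 = 2 + 2 * (x1 \<bullet> x2)"
proof -
  assume "norm x1 = 1" "norm x2 = 1"
  then have "x1 \<bullet> x1 = 1" "x2 \<bullet> x2 = 1" by (simp_all add: dot_square_norm)
  then show ?thesis by (simp add: power2_norm_eq_inner inner_add_left inner_add_right inner_commute)
qed

lemma unit_c_ne: assumes "norm x1 = 1" "norm x2 = 1" "x1 \<noteq> - x2" shows "1 + x1 \<bullet> x2 > 0"
proof -
  have "x1 + x2 \<noteq> 0" using assms(3) by (simp add: eq_neg_iff_add_eq_0)
  then have "(norm (x1 + x2))\<^sup>2 > 0" by simp
  then show ?thesis using unit_sum[OF assms(1,2)] by simp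
qed

lemma unit_c_ne1: assumes "norm x1 = 1" "norm x2 = 1" "x1 \<noteq> x2" shows "1 - x1 \<bullet> x2 > 0"
proof -
  have "x1 - x2 \<noteq> 0" using assms(3) by simp
  then have "(norm (x1 - x2))\<^sup>2 > 0" by simp
  then show ?thesis using unit_dist[OF assms(1,2)] by simp
qed

lemma rot_F: assumes "norm x1 = 1" "norm x2 = 1" "x1 \<noteq> - x2"
  shows "Rot x1 x2 *v v = Fr x1 x2 v"
proof (cases "x1 = x2")
  case True
  then have "x1 \<bullet> x1 = 1" using assms by (simp add: power2_norm_eq_inner[symmetric])
  then show ?thesis using True by (simp add: rot_apply Fr_def)
next
  case False
  have p: "1 + x1 \<bullet> x2 > 0" using unit_c_ne[OF assms] .
  have m: "1 - x1 \<bullet> x2 > 0" using unit_c_ne1[OF assms(1,2) False] .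
  have w: "(norm (cross3 x1 x2))\<^sup>2 = (1 - x1 \<bullet> x2) * (1 + x1 \<bullet> x2)"
    using normsq_cross[of x1 x2] assms by (simp add: algebra_simps power2_eq_square)
  have "(1 - x1 \<bullet> x2) * (cross3 x1 x2 \<bullet> v) / (norm (cross3 x1 x2))\<^sup>2 = (cross3 x1 x2 \<bullet> v) / (1 + x1 \<bullet> x2)"
  proof -
    have "(1 - x1 \<bullet> x2) * (1 + x1 \<bullet> x2) \<noteq> 0" using p m by simp
    then show ?thesis unfolding w using p m by (simp add: field_simps)
  qed
  then show ?thesis using False by (simp add: rot_apply Fr_def)
qed

lemma F_norm: assumes "norm x1 = 1" "norm x2 = 1" "1 + x1 \<bullet> x2 \<noteq> 0"
  shows "norm (Fr x1 x2 v) = norm v"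
proof -
  define c where "c = x1 \<bullet> x2"
  define a where "a = x1 \<bullet> v"
  define b where "b = x2 \<bullet> v"
  define w where "w = cross3 x1 x2"
  define e where "e = w \<bullet> v"
  define V where "V = v \<bullet> v"
  have h11: "x1 \<bullet> x1 = 1" "x2 \<bullet> x2 = 1" using assms by (simp_all add: power2_norm_eq_inner[symmetric])
  have hw: "w \<bullet> x1 = 0" "w \<bullet> x2 = 0" "x1 \<bullet> w = 0" "x2 \<bullet> w = 0" unfolding w_def
    using dot_cross_self by (auto simp: inner_commute)
  have ww: "w \<bullet> w = 1 - c^2" using normsq_cross[of x1 x2] assms unfolding w_def c_def
    by (simp add: power2_norm_eq_inner)
  have ee: "e^2 = V * (1 - c^2) - a^2 - b^2 + 2*a*b*c"
    using gram[of x1 x2 v] h11 unfolding e_def w_def V_def a_def b_def c_def by (simp add: algebra_simps)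
  have c': "x2 \<bullet> x1 = c" "v \<bullet> x1 = a" "v \<bullet> x2 = b" "v \<bullet> w = e" 
     "x1 \<bullet> x2 = c" "x1 \<bullet> v = a" "x2 \<bullet> v = b" "w \<bullet> v = e" 
    unfolding c_def a_def b_def e_def by (rule inner_commute refl)+
  define q where "q = e / (1 + c)"
  have qe: "q * (1 + c) = e" using assms(3) unfolding q_def c_def by simp
  have "Fr x1 x2 v \<bullet> Fr x1 x2 v = c^2*V + a^2 + b^2 - 2*a*b*c + q*q*(1-c^2) + 2*c*e*q"
  proof -
    have F: "Fr x1 x2 v = c *\<^sub>R v - b *\<^sub>R x1 + a *\<^sub>R x2 + q *\<^sub>R w"
      unfolding Fr_def c_def a_def b_def w_def e_def q_def by simp
    show ?thesis unfolding F
      apply (simp only: inner_add_left inner_add_right inner_diff_left inner_diff_right inner_scaleR_left inner_scaleR_right h11 hw c' ww)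
      apply (simp only: V_def[symmetric])
      apply (simp add: power2_eq_square algebra_simps)
      done
  qed
  also have "\<dots> = V"
  proof -
    have "q*q*(1-c^2) + 2*c*e*q = e^2" using qe[symmetric]
      by (simp add: algebra_simps power2_eq_square)
    then show ?thesis using ee by (simp add: algebra_simps power2_eq_square)
  qed
  finally show ?thesis by (simp add: V_def norm_eq_sqrt_inner)
qed

lemma dot_rot: "x2 \<bullet> (Rot x1 x2 *v v) = (if x1 = x2 then x2 \<bullet> v else (x2 \<bullet> x2) * (x1 \<bullet> v))"
  by (simp add: rot_apply inner_add_right inner_diff_right dot_cross_self inner_commute)

lemma mvt_le:
  fixes f f' :: "real \<Rightarrow> real"
  assumes "a \<le> b" "\<And>s. s \<in> {a..b} \<Longrightarrow> (f has_real_derivative f' s) (at s within {a..b})"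
    "\<And>s. s \<in> {a..b} \<Longrightarrow> f' s \<le> B"
  shows "f b - f a \<le> B * (b - a)"
proof -
  have "\<And>x. a \<le> x \<Longrightarrow> x \<le> b \<Longrightarrow> (f has_derivative (*) (f' x)) (at x within {a..b})"
    using assms(2) by (auto simp: has_field_derivative_def)
  from mvt_very_simple[OF assms(1) this] obtain x where x: "x \<in> {a..b}" "f b - f a = f' x * (b - a)"
    by auto
  have "(b - a) * f' x \<le> (b - a) * B" using assms(1) assms(3)[OF x(1)] by (simp add: mult_left_mono)
  then show ?thesis using x by (simp add: mult.commute)
qed

lemma bb_cross: "bounded_bilinear cross3"
  using bilinear_conv_bounded_bilinear bilinear_cross by blast

definition dFr :: "real^3 \<Rightarrow> real^3 \<Rightarrow> real^3 \<Rightarrow> real^3 \<Rightarrow> real^3 \<Rightarrow> real^3 \<Rightarrow> real^3" where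
  "dFr x1 x2 v p1 p2 q =
    (x1 \<bullet> x2) *\<^sub>R q + (x1 \<bullet> p2 + p1 \<bullet> x2) *\<^sub>R v
  - ((x2 \<bullet> v) *\<^sub>R p1 + (x2 \<bullet> q + p2 \<bullet> v) *\<^sub>R x1)
  + ((x1 \<bullet> v) *\<^sub>R p2 + (x1 \<bullet> q + p1 \<bullet> v) *\<^sub>R x2)
  + (((cross3 x1 x2 \<bullet> v) / (1 + x1 \<bullet> x2)) *\<^sub>R (cross3 x1 p2 + cross3 p1 x2)
  + (((cross3 x1 x2 \<bullet> q + (cross3 x1 p2 + cross3 p1 x2) \<bullet> v) * (1 + x1 \<bullet> x2)
        - (cross3 x1 x2 \<bullet> v) * (x1 \<bullet> p2 + p1 \<bullet> x2)) / ((1 + x1 \<bullet> x2) * (1 + x1 \<bullet> x2))) *\<^sub>R cross3 x1 x2)"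

lemma Fr_deriv:
  assumes d1: "(x1 has_vector_derivative p1) (at t within S)"
    and d2: "(x2 has_vector_derivative p2) (at t within S)"
    and d3: "(v has_vector_derivative q) (at t within S)"
    and nz: "1 + x1 t \<bullet> x2 t \<noteq> 0"
  shows "((\<lambda>s. Fr (x1 s) (x2 s) (v s)) has_vector_derivative dFr (x1 t) (x2 t) (v t) p1 p2 q) (at t within S)"
proof -
  have inn: "((\<lambda>s. a s \<bullet> b s) has_real_derivative (a t \<bullet> b' + a' \<bullet> b t)) (at t within S)"
    if "(a has_vector_derivative a') (at t within S)" "(b has_vector_derivative b') (at t within S)"
    for a b :: "real \<Rightarrow> real^3" and a' b'
    unfolding has_real_derivative_iff_has_vector_derivative
    by (rule bounded_bilinear.has_vector_derivative[OF bounded_bilinear_inner that])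
  have cr: "((\<lambda>s. cross3 (x1 s) (x2 s)) has_vector_derivative (cross3 (x1 t) p2 + cross3 p1 (x2 t))) (at t within S)"
    by (rule bounded_bilinear.has_vector_derivative[OF bb_cross d1 d2])
  have c: "((\<lambda>s. x1 s \<bullet> x2 s) has_real_derivative (x1 t \<bullet> p2 + p1 \<bullet> x2 t)) (at t within S)"
    by (rule inn[OF d1 d2])
  have c1: "((\<lambda>s. 1 + x1 s \<bullet> x2 s) has_real_derivative (x1 t \<bullet> p2 + p1 \<bullet> x2 t)) (at t within S)"
    using DERIV_add[OF DERIV_const c] by simp
  have e: "((\<lambda>s. cross3 (x1 s) (x2 s) \<bullet> v s) has_real_derivative
      (cross3 (x1 t) (x2 t) \<bullet> q + (cross3 (x1 t) p2 + cross3 p1 (x2 t)) \<bullet> v t)) (at t within S)"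
    by (rule inn[OF cr d3])
  have ed: "((\<lambda>s. (cross3 (x1 s) (x2 s) \<bullet> v s) / (1 + x1 s \<bullet> x2 s)) has_real_derivative
      ((cross3 (x1 t) (x2 t) \<bullet> q + (cross3 (x1 t) p2 + cross3 p1 (x2 t)) \<bullet> v t) * (1 + x1 t \<bullet> x2 t)
        - (cross3 (x1 t) (x2 t) \<bullet> v t) * (x1 t \<bullet> p2 + p1 \<bullet> x2 t)) / ((1 + x1 t \<bullet> x2 t) * (1 + x1 t \<bullet> x2 t))) (at t within S)"
    by (rule DERIV_divide[OF e c1 nz])
  have t1: "((\<lambda>s. (x1 s \<bullet> x2 s) *\<^sub>R v s) has_vector_derivative
     (x1 t \<bullet> x2 t) *\<^sub>R q + (x1 t \<bullet> p2 + p1 \<bullet> x2 t) *\<^sub>R v t) (at t within S)"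
    by (rule has_vector_derivative_scaleR[OF c d3])
  have t2: "((\<lambda>s. (x2 s \<bullet> v s) *\<^sub>R x1 s) has_vector_derivative
     (x2 t \<bullet> v t) *\<^sub>R p1 + (x2 t \<bullet> q + p2 \<bullet> v t) *\<^sub>R x1 t) (at t within S)"
    by (rule has_vector_derivative_scaleR[OF inn[OF d2 d3] d1])
  have t3: "((\<lambda>s. (x1 s \<bullet> v s) *\<^sub>R x2 s) has_vector_derivative
     (x1 t \<bullet> v t) *\<^sub>R p2 + (x1 t \<bullet> q + p1 \<bullet> v t) *\<^sub>R x2 t) (at t within S)"
    by (rule has_vector_derivative_scaleR[OF inn[OF d1 d3] d2])
  note t4 = has_vector_derivative_scaleR[OF ed cr]
  show ?thesis
    unfolding Fr_def dFr_def
    by (intro has_vector_derivative_add has_vector_derivative_diff t1 t2 t3 t4)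
qed

lemma norm_cross_le: "norm (cross3 a b) \<le> norm a * norm b"
proof -
  have "(norm (cross3 a b))\<^sup>2 \<le> (norm a * norm b)\<^sup>2" using norm_cross_dot[of a b] zero_le_power2[of "a \<bullet> b"] by linarith
  then show ?thesis by (rule power2_le_imp_le) simp
qed

lemma ip_le: "\<bar>a \<bullet> b\<bar> \<le> norm a * norm b"
  by (rule Cauchy_Schwarz_ineq2)

lemma prod_le: "\<bar>a\<bar> \<le> A \<Longrightarrow> norm b \<le> B \<Longrightarrow> norm (a *\<^sub>R b) \<le> A * B"
  by (simp add: mult_mono')

lemma norm8: "norm (A + B - (C + D) + (E + F) + (G + H)) \<le>
   norm A + norm B + norm C + norm D + norm E + norm F + norm G + norm H"
  for A B C D E F G H :: "'a::real_normed_vector"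
proof -
  have "norm (A + B - (C + D) + (E + F) + (G + H)) \<le> norm (A + B - (C + D) + (E + F)) + norm (G + H)"
    by (rule norm_triangle_ineq)
  moreover have "norm (A + B - (C + D) + (E + F)) \<le> norm (A + B - (C + D)) + norm (E + F)"
    by (rule norm_triangle_ineq)
  moreover have "norm (A + B - (C + D)) \<le> norm (A + B) + norm (C + D)"
    by (rule norm_triangle_ineq4)
  moreover have "norm (A + B) \<le> norm A + norm B" "norm (C + D) \<le> norm C + norm D"
    "norm (E + F) \<le> norm E + norm F" "norm (G + H) \<le> norm G + norm H"
    by (rule norm_triangle_ineq)+
  ultimately show ?thesis by linarith
qed

lemma dFr_bound:
  assumes n1: "norm x1 = 1" and n2: "norm x2 = 1" and nv: "norm v \<le> L" and np1: "norm p1 \<le> L"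
    and np2: "norm p2 \<le> L" and nq: "norm q \<le> L" and L1: "1 \<le> L" and d0: "\<delta> > 0"
    and dc: "\<delta> \<le> 1 + x1 \<bullet> x2"
  shows "norm (dFr x1 x2 v p1 p2 q) \<le> 9*L^2 + 2*L^2/\<delta> + 8*L^2/\<delta>^2"
proof -
  define c where "c = x1 \<bullet> x2"
  define cp where "cp = x1 \<bullet> p2 + p1 \<bullet> x2"
  define w where "w = cross3 x1 x2"
  define wp where "wp = cross3 x1 p2 + cross3 p1 x2"
  define e where "e = w \<bullet> v"
  define num where "num = (w \<bullet> q + wp \<bullet> v) * (1 + c) - e * cp"
  have LL: "L \<le> L^2" using L1 by (simp add: power2_eq_square)
  have L0: "0 \<le> L" using L1 by simp
  have hc: "\<bar>c\<bar> \<le> 1" using ip_le[of x1 x2] n1 n2 c_def by simp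
  have hc2: "\<bar>1 + c\<bar> \<le> 2" using hc by simp
  have hcd: "\<delta> \<le> 1 + c" using dc c_def by simp
  have hcp: "\<bar>cp\<bar> \<le> 2 * L"
  proof -
    have "\<bar>x1 \<bullet> p2\<bar> \<le> L" "\<bar>p1 \<bullet> x2\<bar> \<le> L" using ip_le[of x1 p2] ip_le[of p1 x2] n1 n2 np1 np2 by simp_all
    then show ?thesis unfolding cp_def by simp
  qed
  have hw: "norm w \<le> 1" using norm_cross_le[of x1 x2] n1 n2 w_def by simp
  have hwp: "norm wp \<le> 2 * L"
  proof -
    have "norm (cross3 x1 p2) \<le> L" "norm (cross3 p1 x2) \<le> L"
      using norm_cross_le[of x1 p2] norm_cross_le[of p1 x2] n1 n2 np1 np2 by simp_all
    then show ?thesis unfolding wp_def using norm_triangle_ineq[of "cross3 x1 p2" "cross3 p1 x2"] by simp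
  qed
  have he: "\<bar>e\<bar> \<le> L" unfolding e_def using ip_le[of w v] mult_mono[OF hw nv zero_le_one norm_ge_zero]
    by simp
  have i1: "\<bar>x2 \<bullet> v\<bar> \<le> L" "\<bar>x1 \<bullet> v\<bar> \<le> L" using ip_le[of x2 v] ip_le[of x1 v] n1 n2 nv by simp_all
  have i2: "\<bar>x2 \<bullet> q + p2 \<bullet> v\<bar> \<le> 2 * L^2" "\<bar>x1 \<bullet> q + p1 \<bullet> v\<bar> \<le> 2 * L^2"
  proof -
    have a: "\<bar>x2 \<bullet> q\<bar> \<le> L" "\<bar>x1 \<bullet> q\<bar> \<le> L" using ip_le[of x2 q] ip_le[of x1 q] n1 n2 nq by simp_all
    have "\<bar>p2 \<bullet> v\<bar> \<le> L * L" "\<bar>p1 \<bullet> v\<bar> \<le> L * L"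
      using ip_le[of p2 v] ip_le[of p1 v] mult_mono[OF np2 nv L0 norm_ge_zero] mult_mono[OF np1 nv L0 norm_ge_zero]
      by linarith+
    then show "\<bar>x2 \<bullet> q + p2 \<bullet> v\<bar> \<le> 2 * L^2" "\<bar>x1 \<bullet> q + p1 \<bullet> v\<bar> \<le> 2 * L^2"
      using a LL by (simp_all add: power2_eq_square)
  qed
  have hwq: "\<bar>w \<bullet> q + wp \<bullet> v\<bar> \<le> 3 * L^2"
  proof -
    have "\<bar>w \<bullet> q\<bar> \<le> L" using ip_le[of w q] mult_mono[OF hw nq zero_le_one norm_ge_zero]
      by simp
    moreover have "\<bar>wp \<bullet> v\<bar> \<le> 2 * L * L" using ip_le[of wp v] mult_mono[OF hwp nv] L0 by force
    ultimately show ?thesis using LL by (simp add: power2_eq_square)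
  qed
  have hnum: "\<bar>num\<bar> \<le> 8 * L^2"
  proof -
    have "\<bar>(w \<bullet> q + wp \<bullet> v) * (1 + c)\<bar> \<le> 3 * L^2 * 2"
      unfolding abs_mult by (rule mult_mono[OF hwq hc2]) auto
    moreover have "\<bar>e * cp\<bar> \<le> L * (2 * L)"
      unfolding abs_mult by (rule mult_mono[OF he hcp]) (auto simp: L0)
    ultimately show ?thesis unfolding num_def by (simp add: power2_eq_square)
  qed
  have hq1: "\<bar>e / (1 + c)\<bar> \<le> L / \<delta>"
  proof -
    have "\<bar>e / (1 + c)\<bar> = \<bar>e\<bar> / (1 + c)" using hcd d0 by simp
    also have "\<dots> \<le> L / (1 + c)" using he hcd d0 by (simp add: divide_right_mono)
    also have "\<dots> \<le> L / \<delta>" using hcd d0 L0 by (simp add: divide_left_mono)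
    finally show ?thesis .
  qed
  have hq2: "\<bar>num / ((1 + c) * (1 + c))\<bar> \<le> 8 * L^2 / \<delta>^2"
  proof -
    have pos: "0 < (1 + c) * (1 + c)" using hcd d0 by simp
    have dd: "\<delta>^2 \<le> (1 + c) * (1 + c)" using hcd d0 by (simp add: power2_eq_square mult_mono)
    have "\<bar>num / ((1 + c) * (1 + c))\<bar> = \<bar>num\<bar> / ((1 + c) * (1 + c))" using pos by simp
    also have "\<dots> \<le> 8 * L^2 / ((1 + c) * (1 + c))" using hnum pos by (simp add: divide_right_mono)
    also have "\<dots> \<le> 8 * L^2 / \<delta>^2" 
      by (rule divide_left_mono[OF dd]) (use d0 L0 pos in auto)
    finally show ?thesis .
  qed
  have eq: "dFr x1 x2 v p1 p2 q = c *\<^sub>R q + cp *\<^sub>R v - ((x2 \<bullet> v) *\<^sub>R p1 + (x2 \<bullet> q + p2 \<bullet> v) *\<^sub>R x1)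
     + ((x1 \<bullet> v) *\<^sub>R p2 + (x1 \<bullet> q + p1 \<bullet> v) *\<^sub>R x2)
     + ((e / (1 + c)) *\<^sub>R wp + (num / ((1 + c) * (1 + c))) *\<^sub>R w)"
    unfolding dFr_def c_def cp_def w_def wp_def e_def num_def by simp
  have b1: "norm (c *\<^sub>R q) \<le> 1 * L" by (rule prod_le[OF hc nq])
  have b2: "norm (cp *\<^sub>R v) \<le> (2 * L) * L" by (rule prod_le[OF hcp nv])
  have b3: "norm ((x2 \<bullet> v) *\<^sub>R p1) \<le> L * L" by (rule prod_le[OF i1(1) np1])
  have b4: "norm ((x2 \<bullet> q + p2 \<bullet> v) *\<^sub>R x1) \<le> (2 * L^2) * 1" by (rule prod_le[OF i2(1)]) (simp add: n1)
  have b5: "norm ((x1 \<bullet> v) *\<^sub>R p2) \<le> L * L" by (rule prod_le[OF i1(2) np2])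
  have b6: "norm ((x1 \<bullet> q + p1 \<bullet> v) *\<^sub>R x2) \<le> (2 * L^2) * 1" by (rule prod_le[OF i2(2)]) (simp add: n2)
  have b7: "norm ((e / (1 + c)) *\<^sub>R wp) \<le> (L / \<delta>) * (2 * L)" by (rule prod_le[OF hq1 hwp])
  have b8: "norm ((num / ((1 + c) * (1 + c))) *\<^sub>R w) \<le> (8 * L^2 / \<delta>^2) * 1" by (rule prod_le[OF hq2 hw])
  have e7: "(L / \<delta>) * (2 * L) = 2 * L^2 / \<delta>" by (simp add: power2_eq_square)
  have e2: "L * L = L^2" "(2 * L) * L = 2 * L^2" by (simp_all add: power2_eq_square)
  note n8 = norm8[of "c *\<^sub>R q" "cp *\<^sub>R v" "(x2 \<bullet> v) *\<^sub>R p1" "(x2 \<bullet> q + p2 \<bullet> v) *\<^sub>R x1"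
     "(x1 \<bullet> v) *\<^sub>R p2" "(x1 \<bullet> q + p1 \<bullet> v) *\<^sub>R x2" "(e / (1 + c)) *\<^sub>R wp" "(num / ((1 + c) * (1 + c))) *\<^sub>R w"]
  show ?thesis unfolding eq using n8 b1 b2 b3 b4 b5 b6 b7 b8 LL e7 e2 by linarith
qed

lemma inn_deriv: "(a has_vector_derivative a') (at t within S) \<Longrightarrow> (b has_vector_derivative b') (at t within S) \<Longrightarrow>
  ((\<lambda>s. a s \<bullet> b s) has_real_derivative (a t \<bullet> b' + a' \<bullet> b t)) (at t within S)"
  for a b :: "real \<Rightarrow> real^3"
  unfolding has_real_derivative_iff_has_vector_derivative
  by (rule bounded_bilinear.has_vector_derivative[OF bounded_bilinear_inner])

locale sys =
  fixes N :: nat and \<sigma> :: real and \<psi> :: "real \<Rightarrow> real"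
    and x v :: "nat \<Rightarrow> real \<Rightarrow> real^3"
  assumes N: "N \<ge> 1" and sigma: "\<sigma> > 0"
    and psi_nonneg: "\<forall>r\<in>{0..2}. \<psi> r \<ge> 0"
    and psi_decr: "antimono_on {0..2} \<psi>"
    and psi2: "\<psi> 2 = 0"
    and xdot: "\<forall>i<N. \<forall>t\<ge>0. (x i has_vector_derivative v i t) (at t within {0..})"
    and vdot: "\<forall>i<N. \<forall>t\<ge>0. (v i has_vector_derivative
                  vrhs N \<sigma> \<psi> (\<lambda>k. x k t) (\<lambda>k. v k t) i) (at t within {0..})"
    and init_norm: "\<forall>i<N. norm (x i 0) = 1"
    and init_tan: "\<forall>i<N. v i 0 \<bullet> x i 0 = 0"
    and energy_small: "2 * \<sigma> > (real N)\<^sup>2 * energy N \<sigma> (\<lambda>k. x k 0) (\<lambda>k. v k 0)"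
begin

definition "E t = energy N \<sigma> (\<lambda>k. x k t) (\<lambda>k. v k t)"
definition "f i t = vrhs N \<sigma> \<psi> (\<lambda>k. x k t) (\<lambda>k. v k t) i"
definition "P t = (\<forall>i<N. norm (x i t) = 1 \<and> x i t \<bullet> v i t = 0)"
definition "pR t k j = psiR \<psi> (x k t) (x j t) (v j t)"
definition "ps t k j = \<psi> (norm (x k t - x j t))"

lemma Npos: "real N > 0" using N by simp

lemma psi_bounds: "r \<in> {0..2} \<Longrightarrow> 0 \<le> \<psi> r \<and> \<psi> r \<le> \<psi> 0"
  using psi_nonneg monotone_onD[OF psi_decr, of 0 r] by auto

lemma xd: "i < N \<Longrightarrow> t \<ge> 0 \<Longrightarrow> (x i has_vector_derivative v i t) (at t within {0..})"
  using xdot by auto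
lemma vd: "i < N \<Longrightarrow> t \<ge> 0 \<Longrightarrow> (v i has_vector_derivative f i t) (at t within {0..})"
  using vdot unfolding f_def by auto

lemma P0: "P 0" using init_norm init_tan unfolding P_def by (auto simp: inner_commute)

definition "dE t = (1 / real N) * (\<Sum>k<N. 2 * (v k t \<bullet> f k t))
   + \<sigma> / (2 * (real N)\<^sup>2) * (\<Sum>k<N. \<Sum>l<N. 2 * ((x k t - x l t) \<bullet> (v k t - v l t)))"

lemma E_deriv: assumes "t \<ge> 0" shows "(E has_real_derivative dE t) (at t within {0..})"
proof -
  have E_eq: "E = (\<lambda>s. (1 / real N) * (\<Sum>k<N. v k s \<bullet> v k s)
     + \<sigma> / (2 * (real N)\<^sup>2) * (\<Sum>k<N. \<Sum>l<N. (x k s - x l s) \<bullet> (x k s - x l s)))"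
    unfolding E_def energy_def by (simp add: power2_norm_eq_inner)
  have dv: "((\<lambda>s. v k s \<bullet> v k s) has_real_derivative 2 * (v k t \<bullet> f k t)) (at t within {0..})"
    if "k < N" for k
    using inn_deriv[OF vd[OF that assms] vd[OF that assms]] by (simp add: inner_commute)
  have dx: "((\<lambda>s. (x k s - x l s) \<bullet> (x k s - x l s)) has_real_derivative 2 * ((x k t - x l t) \<bullet> (v k t - v l t))) (at t within {0..})"
    if "k < N" "l < N" for k l
  proof -
    have d: "((\<lambda>s. x k s - x l s) has_vector_derivative (v k t - v l t)) (at t within {0..})"
      by (rule has_vector_derivative_diff[OF xd[OF that(1) assms] xd[OF that(2) assms]])
    show ?thesis using inn_deriv[OF d d] by (simp add: inner_commute)
  qed
  show ?thesis unfolding E_eq dE_def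
    by (intro DERIV_add DERIV_cmult DERIV_sum dv dx) auto
qed

lemma dist_le2: "norm a = 1 \<Longrightarrow> norm b = 1 \<Longrightarrow> norm (a - b) \<in> {0..2}"
  using norm_triangle_ineq4[of a b] by simp

lemma pair_bound: assumes "P t" "k < N" "j < N"
  shows "v k t \<bullet> pR t k j \<le> ps t k j * ((v k t \<bullet> v k t) + (v j t \<bullet> v j t)) / 2"
proof -
  have nk: "norm (x k t) = 1" and nj: "norm (x j t) = 1" using assms unfolding P_def by auto
  have psn: "0 \<le> ps t k j" unfolding ps_def using psi_bounds dist_le2[OF nk nj] by auto
  have am: "norm (v k t) * norm (v j t) \<le> ((v k t \<bullet> v k t) + (v j t \<bullet> v j t)) / 2"
  proof -
    have "0 \<le> (norm (v k t) - norm (v j t))^2" by simp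
    then show ?thesis by (simp add: power2_eq_square algebra_simps dot_square_norm)
  qed
  show ?thesis
  proof (cases "x j t = - x k t")
    case True
    then have "pR t k j = 0" unfolding pR_def psiR_def by simp
    moreover have "ps t k j = 0" unfolding ps_def using True psi2 nk
      by (simp add: norm_minus_cancel) (metis mult_2 norm_scaleR real_norm_def abs_of_nonneg scaleR_2 zero_le_numeral mult.commute mult_1)
    ultimately show ?thesis by simp
  next
    case False
    have c: "1 + x j t \<bullet> x k t \<noteq> 0" using unit_c_ne[OF nj nk False] by simp
    have "pR t k j = ps t k j *\<^sub>R Fr (x j t) (x k t) (v j t)"
      unfolding pR_def psiR_def ps_def using False rot_F[OF nj nk False] by simp
    then have "v k t \<bullet> pR t k j = ps t k j * (v k t \<bullet> Fr (x j t) (x k t) (v j t))" by simp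
    also have "\<dots> \<le> ps t k j * (norm (v k t) * norm (v j t))"
      using norm_cauchy_schwarz[of "v k t" "Fr (x j t) (x k t) (v j t)"] F_norm[OF nj nk c] psn
      by (simp add: mult_left_mono)
    also have "\<dots> \<le> ps t k j * (((v k t \<bullet> v k t) + (v j t \<bullet> v j t)) / 2)"
      by (rule mult_left_mono[OF am psn])
    finally show ?thesis by simp
  qed
qed

lemma D_nonpos: assumes "P t"
  shows "(\<Sum>k<N. \<Sum>j<N. v k t \<bullet> pR t k j - ps t k j * (v k t \<bullet> v k t)) \<le> 0"
proof -
  have "(\<Sum>k<N. \<Sum>j<N. v k t \<bullet> pR t k j - ps t k j * (v k t \<bullet> v k t))
     \<le> (\<Sum>k<N. \<Sum>j<N. ps t k j * ((v k t \<bullet> v k t) + (v j t \<bullet> v j t)) / 2 - ps t k j * (v k t \<bullet> v k t))"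
    by (intro sum_mono) (use pair_bound[OF assms] in auto)
  also have "\<dots> = (\<Sum>k<N. \<Sum>j<N. ps t k j * (v j t \<bullet> v j t) / 2 - ps t k j * (v k t \<bullet> v k t) / 2)"
    by (intro sum.cong refl) (simp add: algebra_simps add_divide_distrib)
  also have "\<dots> = (\<Sum>k<N. \<Sum>j<N. ps t k j * (v j t \<bullet> v j t)) / 2 - (\<Sum>k<N. \<Sum>j<N. ps t k j * (v k t \<bullet> v k t)) / 2"
    by (simp add: sum_subtractf sum_divide_distrib)
  also have "(\<Sum>k<N. \<Sum>j<N. ps t k j * (v j t \<bullet> v j t)) = (\<Sum>k<N. \<Sum>j<N. ps t k j * (v k t \<bullet> v k t))"
  proof -
    have sym: "ps t k j = ps t j k" for k j unfolding ps_def by (simp add: norm_minus_commute)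
    show ?thesis by (subst sum.swap) (simp add: sym)
  qed
  finally show ?thesis by simp
qed

lemma vf_eq: assumes "P t" "k < N"
  shows "v k t \<bullet> f k t = (1 / real N) * (\<Sum>j<N. v k t \<bullet> pR t k j - ps t k j * (v k t \<bullet> v k t))
     + (\<sigma> / real N) * (\<Sum>l<N. v k t \<bullet> x l t)"
proof -
  have nk: "norm (x k t) = 1" and tk: "v k t \<bullet> x k t = 0" using assms unfolding P_def by (auto simp: inner_commute)
  show ?thesis unfolding f_def vrhs_def pR_def ps_def
    by (simp add: inner_add_right inner_sum_right inner_diff_right nk tk sum_distrib_left
        sum_subtractf algebra_simps)
qed

lemma xv_sum: assumes "P t"
  shows "(\<Sum>k<N. \<Sum>l<N. (x k t - x l t) \<bullet> (v k t - v l t)) = - 2 * (\<Sum>k<N. \<Sum>l<N. v k t \<bullet> x l t)"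
proof -
  have tk: "x k t \<bullet> v k t = 0" "v k t \<bullet> x k t = 0" if "k < N" for k using assms that unfolding P_def by (auto simp: inner_commute)
  have "(\<Sum>k<N. \<Sum>l<N. (x k t - x l t) \<bullet> (v k t - v l t)) =
        (\<Sum>k<N. \<Sum>l<N. - (v l t \<bullet> x k t) - (v k t \<bullet> x l t))"
    by (intro sum.cong refl) (simp add: inner_diff_left inner_diff_right tk inner_commute)
  also have "\<dots> = - (\<Sum>k<N. \<Sum>l<N. v l t \<bullet> x k t) - (\<Sum>k<N. \<Sum>l<N. v k t \<bullet> x l t)"
    by (simp add: sum_subtractf sum_negf)
  also have "(\<Sum>k<N. \<Sum>l<N. v l t \<bullet> x k t) = (\<Sum>k<N. \<Sum>l<N. v k t \<bullet> x l t)"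
    by (rule sum.swap)
  finally show ?thesis by simp
qed

lemma dE_nonpos: assumes "P t" shows "dE t \<le> 0"
proof -
  define D where "D = (\<Sum>k<N. \<Sum>j<N. v k t \<bullet> pR t k j - ps t k j * (v k t \<bullet> v k t))"
  define S where "S = (\<Sum>k<N. \<Sum>l<N. v k t \<bullet> x l t)"
  have "(\<Sum>k<N. 2 * (v k t \<bullet> f k t)) = 2 / real N * D + 2 * \<sigma> / real N * S"
    unfolding D_def S_def using vf_eq[OF assms]
    by (simp add: sum_distrib_left sum.distrib algebra_simps)
  moreover have "(\<Sum>k<N. \<Sum>l<N. 2 * ((x k t - x l t) \<bullet> (v k t - v l t))) = - 4 * S"
    using xv_sum[OF assms] unfolding S_def by (simp add: sum_distrib_left[symmetric])
  ultimately have "dE t = 2 / (real N)^2 * D" unfolding dE_def using Npos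
    by (simp add: field_simps power2_eq_square)
  moreover have "D \<le> 0" unfolding D_def by (rule D_nonpos[OF assms])
  ultimately show ?thesis using Npos by (simp add: divide_nonpos_pos)
qed

lemma E_mono: assumes "T \<ge> 0" "\<forall>s\<in>{0..T}. P s" shows "E T \<le> E 0"
proof -
  have "E T - E 0 \<le> 0 * (T - 0)"
  proof (rule mvt_le[OF assms(1)])
    fix s assume s: "s \<in> {0..T}"
    show "(E has_real_derivative dE s) (at s within {0..T})"
      using E_deriv[of s] s by (auto intro: DERIV_subset)
    show "dE s \<le> 0" using dE_nonpos assms(2) s by auto
  qed
  then show ?thesis by simp
qed

definition "E0 = E 0"
definition "\<Delta> = 2 * (real N)^2 * E0 / \<sigma>"

lemma kin_nonneg: "0 \<le> (1 / real N) * (\<Sum>k<N. (norm (v k t))\<^sup>2)"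
  by (simp add: sum_nonneg)
lemma pot_nonneg: "0 \<le> \<sigma> / (2 * (real N)\<^sup>2) * (\<Sum>k<N. \<Sum>l<N. (norm (x k t - x l t))\<^sup>2)"
  using sigma by (simp add: sum_nonneg)

lemma E_nonneg: "0 \<le> E t"
  unfolding E_def energy_def using kin_nonneg[of t] pot_nonneg[of t] by simp

lemma Delta_lt: "\<Delta> < 4"
proof -
  have "(real N)^2 * E0 < 2 * \<sigma>" using energy_small unfolding E0_def E_def by (simp add: mult_ac)
  then have a: "2 * (real N)^2 * E0 < 4 * \<sigma>" by linarith
  have "\<Delta> * \<sigma> = 2 * (real N)^2 * E0" unfolding \<Delta>_def using sigma by simp
  then have "\<Delta> * \<sigma> < 4 * \<sigma>" using a by linarith
  then show ?thesis using sigma by simp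
qed

lemma Delta_nonneg: "0 \<le> \<Delta>"
  unfolding \<Delta>_def using E_nonneg[of 0] sigma unfolding E0_def by simp

lemma v_bound: assumes "E t \<le> E0" "k < N" shows "(norm (v k t))\<^sup>2 \<le> real N * E0"
proof -
  have "(norm (v k t))\<^sup>2 \<le> (\<Sum>k<N. (norm (v k t))\<^sup>2)"
    by (rule member_le_sum) (use assms(2) in auto)
  moreover have "(1 / real N) * (\<Sum>k<N. (norm (v k t))\<^sup>2) \<le> E t"
    unfolding E_def energy_def using pot_nonneg[of t] by simp
  ultimately have "(1 / real N) * (norm (v k t))\<^sup>2 \<le> E0" using assms(1) Npos
    by (smt (verit, ccfv_SIG) divide_nonneg_nonneg mult_left_mono of_nat_0_le_iff zero_le_one)
  then show ?thesis using Npos by (simp add: field_simps)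
qed

lemma d_bound: assumes "E t \<le> E0" "k < N" "l < N" shows "(norm (x k t - x l t))\<^sup>2 \<le> \<Delta>"
proof -
  have "(norm (x k t - x l t))\<^sup>2 \<le> (\<Sum>l<N. (norm (x k t - x l t))\<^sup>2)"
    by (rule member_le_sum) (use assms(3) in auto)
  also have "\<dots> \<le> (\<Sum>k<N. \<Sum>l<N. (norm (x k t - x l t))\<^sup>2)"
    by (rule member_le_sum[where f = "\<lambda>k. \<Sum>l<N. (norm (x k t - x l t))\<^sup>2"]) (use assms(2) in \<open>auto intro: sum_nonneg\<close>)
  finally have a: "(norm (x k t - x l t))\<^sup>2 \<le> (\<Sum>k<N. \<Sum>l<N. (norm (x k t - x l t))\<^sup>2)" .
  have "\<sigma> / (2 * (real N)\<^sup>2) * (\<Sum>k<N. \<Sum>l<N. (norm (x k t - x l t))\<^sup>2) \<le> E t"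
    unfolding E_def energy_def using kin_nonneg[of t] by simp
  then have "\<sigma> * (\<Sum>k<N. \<Sum>l<N. (norm (x k t - x l t))\<^sup>2) \<le> 2 * ((real N)^2 * E t)"
    using Npos sigma by (simp add: field_simps)
  moreover have "(real N)\<^sup>2 * E t \<le> (real N)\<^sup>2 * E0" using assms(1) by (simp add: mult_left_mono)
  ultimately have "\<sigma> * (\<Sum>k<N. \<Sum>l<N. (norm (x k t - x l t))\<^sup>2) \<le> 2 * (real N)^2 * E0"
    by linarith
  then have "(\<Sum>k<N. \<Sum>l<N. (norm (x k t - x l t))\<^sup>2) \<le> \<Delta>"
    using sigma unfolding \<Delta>_def by (simp only: pos_le_divide_eq mult.commute)
  with a show ?thesis by simp
qed

end

context sys begin

lemma bd_eq: assumes "x i s \<noteq> 0"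
  shows "x i s \<bullet> f i s + v i s \<bullet> v i s = (1 / real N) * (\<Sum>j<N. x i s \<bullet> pR s i j - ps s i j * (x i s \<bullet> v i s))"
proof -
  have xx: "x i s \<bullet> x i s = (norm (x i s))\<^sup>2" by (simp add: power2_norm_eq_inner)
  have vv: "v i s \<bullet> v i s = (norm (v i s))\<^sup>2" by (simp add: power2_norm_eq_inner)
  have nz: "(norm (x i s))\<^sup>2 \<noteq> 0" using assms by simp
  show ?thesis unfolding f_def vrhs_def pR_def ps_def
    using nz by (simp add: inner_add_right inner_sum_right inner_diff_right xx vv sum_distrib_left
        sum_subtractf algebra_simps)
qed

lemma xpR_bound: assumes "norm (x i s - x j s) \<in> {0..2}" "(norm (x i s))\<^sup>2 \<le> 9/4"
  shows "\<bar>x i s \<bullet> pR s i j\<bar> \<le> \<psi> 0 * (9/4) * \<bar>x j s \<bullet> v j s\<bar>"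
proof -
  have pb: "0 \<le> \<psi> (norm (x i s - x j s))" "\<psi> (norm (x i s - x j s)) \<le> \<psi> 0" using psi_bounds[OF assms(1)] by auto
  have p0: "0 \<le> \<psi> 0" using pb by simp
  show ?thesis
  proof (cases "x j s = - x i s")
    case True
    then show ?thesis unfolding pR_def psiR_def using p0 by simp
  next
    case False
    then have eq: "x i s \<bullet> pR s i j = \<psi> (norm (x i s - x j s)) *
        (if x j s = x i s then x i s \<bullet> v j s else (x i s \<bullet> x i s) * (x j s \<bullet> v j s))"
      unfolding pR_def psiR_def by (simp add: dot_rot)
    have xx: "0 \<le> x i s \<bullet> x i s" "x i s \<bullet> x i s \<le> 9/4" using assms(2) by (simp_all add: power2_norm_eq_inner)
    have "\<bar>(if x j s = x i s then x i s \<bullet> v j s else (x i s \<bullet> x i s) * (x j s \<bullet> v j s))\<bar> \<le> 9/4 * \<bar>x j s \<bullet> v j s\<bar>"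
    proof (cases "x j s = x i s")
      case True then show ?thesis by simp
    next
      case False
      have "(x i s \<bullet> x i s) * \<bar>x j s \<bullet> v j s\<bar> \<le> 9/4 * \<bar>x j s \<bullet> v j s\<bar>"
        by (rule mult_right_mono[OF xx(2)]) simp
      then show ?thesis using False xx by (simp add: abs_mult)
    qed
    then have "\<psi> (norm (x i s - x j s)) * \<bar>(if x j s = x i s then x i s \<bullet> v j s else (x i s \<bullet> x i s) * (x j s \<bullet> v j s))\<bar>
       \<le> \<psi> (norm (x i s - x j s)) * (9/4 * \<bar>x j s \<bullet> v j s\<bar>)"
      by (rule mult_left_mono[OF _ pb(1)])
    then have "\<bar>x i s \<bullet> pR s i j\<bar> \<le> \<psi> (norm (x i s - x j s)) * (9/4 * \<bar>x j s \<bullet> v j s\<bar>)"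
      unfolding eq abs_mult using pb(1) by (simp only: abs_of_nonneg)
    also have "\<dots> \<le> \<psi> 0 * (9/4 * \<bar>x j s \<bullet> v j s\<bar>)" by (rule mult_right_mono[OF pb(2)]) simp
    finally show ?thesis by simp
  qed
qed

lemma abs_le_mvt:
  fixes g g' :: "real \<Rightarrow> real"
  assumes "a \<le> b" "\<And>s. s \<in> {a..b} \<Longrightarrow> (g has_real_derivative g' s) (at s within {a..b})"
    "\<And>s. s \<in> {a..b} \<Longrightarrow> \<bar>g' s\<bar> \<le> B"
  shows "\<bar>g b - g a\<bar> \<le> B * (b - a)"
proof -
  have "g b - g a \<le> B * (b - a)"
  proof (rule mvt_le[OF assms(1,2)])
    fix s assume "s \<in> {a..b}" then show "g' s \<le> B" using assms(3)[of s] by (auto simp: abs_le_iff)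
  qed
  moreover have "(\<lambda>s. - g s) b - (\<lambda>s. - g s) a \<le> B * (b - a)"
  proof (rule mvt_le[OF assms(1)])
    fix s assume s: "s \<in> {a..b}"
    show "((\<lambda>s. - g s) has_real_derivative - g' s) (at s within {a..b})"
      using DERIV_minus[OF assms(2)[OF s]] .
    show "- g' s \<le> B" using assms(3)[OF s] by simp
  qed
  ultimately show ?thesis by simp
qed

lemma extend: assumes T0: "T \<ge> 0" and PT: "\<forall>s\<in>{0..T}. P s" shows "\<exists>h>0. \<forall>s\<in>{0..T+h}. P s"
proof -
  have ET: "E T \<le> E0" using E_mono[OF T0 PT] E0_def by simp
  have PTT: "P T" using PT T0 by auto
  have nT: "norm (x i T) = 1" if "i < N" for i using PTT that unfolding P_def by auto
  have bT: "x i T \<bullet> v i T = 0" if "i < N" for i using PTT that unfolding P_def by auto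
  have dT: "norm (x k T - x l T) \<le> sqrt \<Delta>" if "k < N" "l < N" for k l
    using d_bound[OF ET that] by (simp add: real_le_rsqrt)
  have sq: "sqrt \<Delta> < 2"
  proof -
    have "sqrt \<Delta> < sqrt 4" using Delta_lt by (simp only: real_sqrt_less_iff)
    then show ?thesis by simp
  qed
  define \<epsilon> where "\<epsilon> = min (1/2) ((2 - sqrt \<Delta>) / 2)"
  have e0: "\<epsilon> > 0" unfolding \<epsilon>_def using sq by simp
  have ev: "eventually (\<lambda>s. \<forall>i\<in>{..<N}. dist (x i s) (x i T) < \<epsilon>) (at T within {0..})"
  proof (rule eventually_ball_finite)
    show "\<forall>i\<in>{..<N}. eventually (\<lambda>s. dist (x i s) (x i T) < \<epsilon>) (at T within {0..})"
    proof
      fix i assume "i \<in> {..<N}"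
      then have "continuous (at T within {0..}) (x i)"
        using has_vector_derivative_continuous[OF xd] T0 by auto
      then show "eventually (\<lambda>s. dist (x i s) (x i T) < \<epsilon>) (at T within {0..})"
        unfolding continuous_within using tendstoD e0 by blast
    qed
  qed simp
  then obtain d where d0: "d > 0" and dP: "\<forall>s\<in>{0..}. s \<noteq> T \<and> dist s T < d \<longrightarrow> (\<forall>i\<in>{..<N}. dist (x i s) (x i T) < \<epsilon>)"
    unfolding eventually_at by blast
  have near: "dist (x i s) (x i T) < \<epsilon>" if "T \<le> s" "s < T + d" "i < N" for s i
  proof (cases "s = T")
    case True then show ?thesis using e0 by simp
  next
    case False then show ?thesis using dP that T0 by (auto simp: dist_real_def)
  qed
  have nx: "norm (x i s) \<le> 3/2" "x i s \<noteq> 0" if "T \<le> s" "s < T + d" "i < N" for s i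
  proof -
    have "norm (x i s - x i T) < 1/2" using near[OF that] \<epsilon>_def by (simp add: dist_norm)
    moreover have "norm (x i s) \<le> norm (x i T) + norm (x i s - x i T)" by (rule norm_triangle_sub)
    moreover have "norm (x i T) \<le> norm (x i s) + norm (x i T - x i s)" by (rule norm_triangle_sub)
    moreover have "norm (x i T - x i s) = norm (x i s - x i T)" by (rule norm_minus_commute)
    ultimately show "norm (x i s) \<le> 3/2" "x i s \<noteq> 0" using nT[OF that(3)] by auto
  qed
  have nx2: "(norm (x i s))\<^sup>2 \<le> 9/4" if "T \<le> s" "s < T + d" "i < N" for s i
  proof -
    have "(norm (x i s))\<^sup>2 \<le> (3/2)\<^sup>2" by (rule power_mono[OF nx(1)[OF that]]) simp
    then show ?thesis by (simp add: power2_eq_square)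
  qed
  have ds: "norm (x i s - x j s) \<in> {0..2}" if "T \<le> s" "s < T + d" "i < N" "j < N" for s i j
  proof -
    have a: "norm (x i s - x i T) < \<epsilon>" "norm (x j s - x j T) < \<epsilon>"
      using near[OF that(1,2,3)] near[OF that(1,2,4)] by (simp_all add: dist_norm)
    have eq: "x i s - x j s = (x i s - x i T) - (x j s - x j T) + (x i T - x j T)" by simp
    have t1: "norm ((x i s - x i T) - (x j s - x j T) + (x i T - x j T)) \<le> norm ((x i s - x i T) - (x j s - x j T)) + norm (x i T - x j T)"
      by (rule norm_triangle_ineq)
    have t2: "norm ((x i s - x i T) - (x j s - x j T)) \<le> norm (x i s - x i T) + norm (x j s - x j T)"
      by (rule norm_triangle_ineq4)
    have "norm (x i s - x j s) \<le> norm (x i s - x i T) + norm (x j s - x j T) + norm (x i T - x j T)"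
      unfolding eq using t1 t2 by linarith
    also have "\<dots> \<le> 2 * \<epsilon> + sqrt \<Delta>" using a dT[OF that(3,4)] by simp
    also have "\<dots> \<le> 2" unfolding \<epsilon>_def by (simp add: min_def field_simps)
    finally show ?thesis by simp
  qed
  define K where "K = 4 * \<psi> 0 + 1"
  have p0: "0 \<le> \<psi> 0" using psi_bounds[of 0] by simp
  have K1: "K \<ge> 1" unfolding K_def using p0 by simp
  define h where "h = min (d/2) (1 / (2 * real N * K))"
  have h0: "h > 0" unfolding h_def using d0 K1 Npos by simp
  have hd: "T + h < T + d" unfolding h_def using d0 by simp
  have NKh: "real N * K * h \<le> 1/2"
  proof -
    have "h \<le> 1 / (2 * real N * K)" unfolding h_def by simp
    then have "real N * K * h \<le> real N * K * (1 / (2 * real N * K))"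
      by (rule mult_left_mono) (use Npos K1 in simp)
    also have "\<dots> = 1/2" using Npos K1 by simp
    finally show ?thesis .
  qed
  define I where "I = {T..T+h}"
  have sI: "T \<le> s" "s < T + d" "s \<ge> 0" if "s \<in> I" for s using that hd T0 unfolding I_def by auto
  define b where "b i s = x i s \<bullet> v i s" for i s
  define S where "S s = (\<Sum>i<N. \<bar>b i s\<bar>)" for s
  have bder: "(b i has_real_derivative (x i s \<bullet> f i s + v i s \<bullet> v i s)) (at s within {0..})"
    if "i < N" "s \<ge> 0" for i s
    unfolding b_def using inn_deriv[OF xd[OF that] vd[OF that]] by simp
  have bdb: "\<bar>x i s \<bullet> f i s + v i s \<bullet> v i s\<bar> \<le> K * S s" if "i < N" "s \<in> I" for i s
  proof -
    have "\<bar>x i s \<bullet> f i s + v i s \<bullet> v i s\<bar> = (1 / real N) * \<bar>\<Sum>j<N. x i s \<bullet> pR s i j - ps s i j * b i s\<bar>"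
      using bd_eq[OF nx(2)[OF sI(1,2)[OF that(2)] that(1)]] Npos unfolding b_def by (simp add: abs_mult)
    also have "\<dots> \<le> (1 / real N) * (\<Sum>j<N. \<psi> 0 * (9/4) * \<bar>b j s\<bar> + \<psi> 0 * S s)"
    proof -
      have "\<bar>\<Sum>j<N. x i s \<bullet> pR s i j - ps s i j * b i s\<bar> \<le> (\<Sum>j<N. \<bar>x i s \<bullet> pR s i j - ps s i j * b i s\<bar>)"
        by (rule sum_abs)
      also have "\<dots> \<le> (\<Sum>j<N. \<psi> 0 * (9/4) * \<bar>b j s\<bar> + \<psi> 0 * S s)"
      proof (rule sum_mono)
        fix j assume j: "j \<in> {..<N}"
        have dd: "norm (x i s - x j s) \<in> {0..2}" using ds[OF sI(1,2)[OF that(2)] that(1)] j by simp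
        have t1: "\<bar>x i s \<bullet> pR s i j\<bar> \<le> \<psi> 0 * (9/4) * \<bar>b j s\<bar>"
          using xpR_bound[OF dd nx2[OF sI(1,2)[OF that(2)] that(1)]] unfolding b_def .
        have bS: "\<bar>b i s\<bar> \<le> S s" unfolding S_def by (rule member_le_sum) (use that in auto)
        have pp: "0 \<le> ps s i j" "ps s i j \<le> \<psi> 0" unfolding ps_def using psi_bounds[OF dd] by auto
        have "\<bar>ps s i j * b i s\<bar> \<le> \<psi> 0 * S s"
          unfolding abs_mult using pp bS by (simp add: mult_mono)
        then show "\<bar>x i s \<bullet> pR s i j - ps s i j * b i s\<bar> \<le> \<psi> 0 * (9/4) * \<bar>b j s\<bar> + \<psi> 0 * S s"
          using t1 by linarith
      qed
      finally show ?thesis by (rule mult_left_mono) (use Npos in simp)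
    qed
    also have "\<dots> = (1 / real N) * (\<psi> 0 * (9/4) * S s) + \<psi> 0 * S s"
    proof -
      have "(\<Sum>j<N. \<psi> 0 * (9/4) * \<bar>b j s\<bar> + \<psi> 0 * S s) = \<psi> 0 * (9/4) * S s + real N * (\<psi> 0 * S s)"
        unfolding S_def by (simp add: sum.distrib sum_distrib_left)
      then show ?thesis using Npos by (simp add: field_simps)
    qed
    also have "\<dots> \<le> K * S s"
    proof -
      have S0: "0 \<le> S s" unfolding S_def by (simp add: sum_nonneg)
      have "(1 / real N) * (\<psi> 0 * (9/4) * S s) \<le> 1 * (\<psi> 0 * (9/4) * S s)"
        by (rule mult_right_mono) (use Npos N p0 S0 in auto)
      moreover have "K * S s = 4 * (\<psi> 0 * S s) + S s" by (simp add: K_def algebra_simps)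
      moreover have "\<psi> 0 * (9/4) * S s = 9/4 * (\<psi> 0 * S s)" by simp
      moreover have "0 \<le> \<psi> 0 * S s" using p0 S0 by simp
      ultimately show ?thesis using S0 by linarith
    qed
    finally show ?thesis .
  qed
  have bcont: "continuous_on I (b i)" if "i < N" for i
    unfolding continuous_on_eq_continuous_within
  proof
    fix s assume "s \<in> I"
    then have "continuous (at s within {0..}) (b i)" using DERIV_continuous[OF bder[OF that]] sI by auto
    then show "continuous (at s within I) (b i)"
      by (rule continuous_within_subset) (use T0 in \<open>auto simp: I_def\<close>)
  qed
  have Scont: "continuous_on I S" unfolding S_def[abs_def]
    by (intro continuous_intros) (use bcont in auto)
  obtain s0 where s0: "s0 \<in> I" "\<forall>s\<in>I. S s \<le> S s0"
    using continuous_attains_sup[OF _ _ Scont] h0 unfolding I_def by auto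
  define M where "M = S s0"
  have M0: "0 \<le> M" unfolding M_def S_def by (simp add: sum_nonneg)
  have bi_le: "\<bar>b i s\<bar> \<le> K * M * h" if "i < N" "s \<in> I" for i s
  proof -
    have "\<bar>b i s - b i T\<bar> \<le> (K * M) * (s - T)"
    proof (rule abs_le_mvt)
      show "T \<le> s" using that I_def by simp
      fix r assume r: "r \<in> {T..s}"
      then have rI: "r \<in> I" using that I_def by auto
      show "(b i has_real_derivative (x i r \<bullet> f i r + v i r \<bullet> v i r)) (at r within {T..s})"
        by (rule DERIV_subset[OF bder[OF that(1) sI(3)[OF rI]]]) (use T0 in auto)
      show "\<bar>x i r \<bullet> f i r + v i r \<bullet> v i r\<bar> \<le> K * M"
      proof -
        have "K * S r \<le> K * S s0" by (rule mult_left_mono) (use s0(2) rI K1 in auto)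
        then show ?thesis using bdb[OF that(1) rI] unfolding M_def by linarith
      qed
    qed
    moreover have "b i T = 0" using bT[OF that(1)] unfolding b_def .
    moreover have "(K * M) * (s - T) \<le> (K * M) * h" using that I_def K1 M0 by (intro mult_left_mono) auto
    ultimately show ?thesis by simp
  qed
  have "M \<le> real N * K * M * h"
  proof -
    have "S s0 \<le> (\<Sum>i<N. K * M * h)" unfolding S_def by (rule sum_mono) (use bi_le s0(1) in auto)
    then show ?thesis unfolding M_def[symmetric] by simp
  qed
  also have "\<dots> \<le> M / 2"
  proof -
    have "(real N * K * h) * M \<le> (1/2) * M" by (rule mult_right_mono[OF NKh M0])
    then show ?thesis by (simp add: algebra_simps)
  qed
  finally have M00: "M = 0" using M0 by simp
  have bz: "b i s = 0" if "i < N" "s \<in> I" for i s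
  proof -
    have "\<bar>b i s\<bar> \<le> S s" unfolding S_def by (rule member_le_sum) (use that in auto)
    also have "\<dots> \<le> M" using s0 that unfolding M_def by auto
    finally show ?thesis using M00 by simp
  qed
  have PI: "P s" if "s \<in> I" for s
    unfolding P_def
  proof (intro allI impI conjI)
    fix i assume i: "i < N"
    show "x i s \<bullet> v i s = 0" using bz[OF i that] unfolding b_def .
    have "\<bar>(x i s \<bullet> x i s) - (x i T \<bullet> x i T)\<bar> \<le> 0 * (s - T)"
    proof (rule abs_le_mvt)
      show "T \<le> s" using that I_def by simp
      fix r assume r: "r \<in> {T..s}"
      then have rI: "r \<in> I" using that I_def by auto
      show "((\<lambda>r. x i r \<bullet> x i r) has_real_derivative (x i r \<bullet> v i r + v i r \<bullet> x i r)) (at r within {T..s})"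
        by (rule DERIV_subset[OF inn_deriv[OF xd[OF i sI(3)[OF rI]] xd[OF i sI(3)[OF rI]]]]) (use T0 in auto)
      show "\<bar>x i r \<bullet> v i r + v i r \<bullet> x i r\<bar> \<le> 0"
        using bz[OF i rI] unfolding b_def by (simp add: inner_commute)
    qed
    then have "x i s \<bullet> x i s = 1" using nT[OF i] by (simp add: dot_square_norm)
    then show "norm (x i s) = 1" by (simp add: norm_eq_sqrt_inner)
  qed
  show ?thesis
  proof (intro exI conjI ballI)
    show "h > 0" by (rule h0)
    fix s assume "s \<in> {0..T+h}"
    then show "P s" using PT PI unfolding I_def by (cases "s \<le> T") auto
  qed
qed

end

context sys begin

lemma global: assumes "t \<ge> 0" shows "P t"
proof (rule ccontr)
  assume nP: "\<not> P t"
  define G where "G = {u. 0 \<le> u \<and> (\<forall>s\<in>{0..u}. P s)}"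
  have G0: "0 \<in> G" unfolding G_def using P0 by auto
  have ub: "u < t" if "u \<in> G" for u
  proof (rule ccontr)
    assume "\<not> u < t"
    then have "t \<in> {0..u}" using assms by simp
    then show False using that nP unfolding G_def by auto
  qed
  have bdd: "bdd_above G" unfolding bdd_above_def using ub by (meson less_imp_le)
  define T where "T = Sup G"
  have T0: "T \<ge> 0" unfolding T_def using cSup_upper[OF G0 bdd] .
  have below: "P s" if s0: "0 \<le> s" "s < T" for s
  proof -
    have "\<exists>g\<in>G. s < g" using less_cSup_iff[of G s] G0 bdd s0(2) unfolding T_def by auto
    then obtain g where "g \<in> G" "s < g" by blast
    then show ?thesis unfolding G_def using s0 by auto
  qed
  have cx: "continuous_on {0..T} (x i)" if "i < N" for i
  proof -
    have "continuous_on {0..} (x i)"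
      by (rule continuous_on_vector_derivative[OF xd[OF that]]) simp
    then show ?thesis by (rule continuous_on_subset) auto
  qed
  have cv: "continuous_on {0..T} (v i)" if "i < N" for i
  proof -
    have "continuous_on {0..} (v i)"
      by (rule continuous_on_vector_derivative[OF vd[OF that]]) simp
    then show ?thesis by (rule continuous_on_subset) auto
  qed
  have PT: "P T"
  proof (cases "T = 0")
    case True then show ?thesis using P0 by simp
  next
    case False
    then have Tp: "T > 0" using T0 by simp
    have clos: "T \<in> A" if "closed A" "{0..<T} \<subseteq> A" for A
    proof -
      have "closure {0..<T} \<subseteq> A" by (rule closure_minimal[OF that(2,1)])
      then show ?thesis using Tp by auto
    qed
    show ?thesis unfolding P_def
    proof (intro allI impI conjI)
      fix i assume i: "i < N"
      have A1: "closed {s \<in> {0..T}. norm (x i s) = 1}"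
        by (rule continuous_closed_preimage_constant) (auto intro!: continuous_intros cx[OF i])
      have "T \<in> {s \<in> {0..T}. norm (x i s) = 1}"
        by (rule clos[OF A1]) (use below i in \<open>auto simp: P_def\<close>)
      then show "norm (x i T) = 1" by simp
      have A2: "closed {s \<in> {0..T}. x i s \<bullet> v i s = 0}"
        by (rule continuous_closed_preimage_constant) (auto intro!: continuous_intros cx[OF i] cv[OF i])
      have "T \<in> {s \<in> {0..T}. x i s \<bullet> v i s = 0}"
        by (rule clos[OF A2]) (use below i in \<open>auto simp: P_def\<close>)
      then show "x i T \<bullet> v i T = 0" by simp
    qed
  qed
  have "\<forall>s\<in>{0..T}. P s" using below PT by (metis atLeastAtMost_iff order_le_less)
  then obtain h where h: "h > 0" "\<forall>s\<in>{0..T+h}. P s" using extend[OF T0] by blast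
  then have "T + h \<in> G" unfolding G_def using T0 by simp
  then have "T + h \<le> T" unfolding T_def by (rule cSup_upper[OF _ bdd])
  then show False using h by simp
qed

lemma Et: "t \<ge> 0 \<Longrightarrow> E t \<le> E0"
  using E_mono[of t] global unfolding E0_def by auto

definition "V = sqrt (real N * E0)"
definition "Q = real N * E0 + 2 * \<psi> 0 * V + 2 * \<sigma>"
definition "\<delta> = 2 - \<Delta> / 2"

lemma delta_pos: "\<delta> > 0" unfolding \<delta>_def using Delta_lt by simp

lemma nx1: "t \<ge> 0 \<Longrightarrow> i < N \<Longrightarrow> norm (x i t) = 1"
  using global unfolding P_def by auto
lemma tan: "t \<ge> 0 \<Longrightarrow> i < N \<Longrightarrow> x i t \<bullet> v i t = 0"
  using global unfolding P_def by auto

lemma vnorm: "t \<ge> 0 \<Longrightarrow> k < N \<Longrightarrow> norm (v k t) \<le> V"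
  unfolding V_def using v_bound[OF Et] by (simp add: real_le_rsqrt)

lemma V0: "0 \<le> V" unfolding V_def using E_nonneg[of 0] unfolding E0_def by simp

lemma cdelta: assumes "t \<ge> 0" "i < N" "j < N" shows "\<delta> \<le> 1 + x j t \<bullet> x i t" "x j t \<noteq> - x i t"
proof -
  have "(norm (x j t - x i t))\<^sup>2 \<le> \<Delta>" by (rule d_bound[OF Et[OF assms(1)] assms(3,2)])
  then show a: "\<delta> \<le> 1 + x j t \<bullet> x i t" using unit_dist[OF nx1[OF assms(1,3)] nx1[OF assms(1,2)]]
    unfolding \<delta>_def by simp
  show "x j t \<noteq> - x i t"
  proof
    assume "x j t = - x i t"
    then have "1 + x j t \<bullet> x i t = 0" using nx1[OF assms(1,2)] by (simp add: dot_square_norm)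
    then show False using a delta_pos by simp
  qed
qed

lemma pR_norm: assumes "t \<ge> 0" "i < N" "j < N" shows "norm (pR t i j) \<le> \<psi> 0 * V"
proof -
  have ni: "norm (x i t) = 1" and nj: "norm (x j t) = 1" using nx1 assms by auto
  have na: "x j t \<noteq> - x i t" using cdelta[OF assms] by simp
  have dd: "norm (x i t - x j t) \<in> {0..2}" by (rule dist_le2[OF ni nj])
  have c: "1 + x j t \<bullet> x i t \<noteq> 0" using cdelta[OF assms] delta_pos by linarith
  have "pR t i j = \<psi> (norm (x i t - x j t)) *\<^sub>R Fr (x j t) (x i t) (v j t)"
    unfolding pR_def psiR_def using na rot_F[OF nj ni na] by simp
  then have "norm (pR t i j) = \<psi> (norm (x i t - x j t)) * norm (v j t)"
    using F_norm[OF nj ni c] psi_bounds[OF dd] by simp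
  also have "\<dots> \<le> \<psi> 0 * V"
    using psi_bounds[OF dd] vnorm[OF assms(1,3)] by (intro mult_mono) auto
  finally show ?thesis .
qed

lemma f_bound: assumes "t \<ge> 0" "i < N" shows "norm (f i t) \<le> Q"
proof -
  have ni: "norm (x i t) = 1" using nx1 assms by auto
  have p0: "0 \<le> \<psi> 0" using psi_bounds[of 0] by simp
  have A: "norm (- ((norm (v i t))\<^sup>2 / (norm (x i t))\<^sup>2) *\<^sub>R x i t) \<le> real N * E0"
    using ni v_bound[OF Et[OF assms(1)] assms(2)] by simp
  have B: "norm (\<Sum>j<N. (1 / real N) *\<^sub>R (psiR \<psi> (x i t) (x j t) (v j t) - \<psi> (norm (x i t - x j t)) *\<^sub>R v i t))
     \<le> (\<Sum>j<N. (1 / real N) * (\<psi> 0 * V + \<psi> 0 * V))"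
  proof (rule sum_norm_le)
    fix j assume j: "j \<in> {..<N}"
    have dd: "norm (x i t - x j t) \<in> {0..2}" by (rule dist_le2[OF ni nx1[OF assms(1)]]) (use j in simp)
    have "norm (psiR \<psi> (x i t) (x j t) (v j t) - \<psi> (norm (x i t - x j t)) *\<^sub>R v i t)
       \<le> norm (psiR \<psi> (x i t) (x j t) (v j t)) + norm (\<psi> (norm (x i t - x j t)) *\<^sub>R v i t)"
      by (rule norm_triangle_ineq4)
    also have "\<dots> \<le> \<psi> 0 * V + \<psi> 0 * V"
    proof (rule add_mono)
      show "norm (psiR \<psi> (x i t) (x j t) (v j t)) \<le> \<psi> 0 * V"
        using pR_norm[OF assms] j unfolding pR_def by simp
      show "norm (\<psi> (norm (x i t - x j t)) *\<^sub>R v i t) \<le> \<psi> 0 * V"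
        using psi_bounds[OF dd] vnorm[OF assms] by (simp add: mult_mono)
    qed
    finally show "norm ((1 / real N) *\<^sub>R (psiR \<psi> (x i t) (x j t) (v j t) - \<psi> (norm (x i t - x j t)) *\<^sub>R v i t))
       \<le> (1 / real N) * (\<psi> 0 * V + \<psi> 0 * V)"
      using Npos by (simp add: mult_left_mono divide_right_mono)
  qed
  have B': "(\<Sum>j<N. (1 / real N) * (\<psi> 0 * V + \<psi> 0 * V)) = 2 * \<psi> 0 * V" using Npos by simp
  have C: "norm (\<Sum>k<N. (\<sigma> / real N) *\<^sub>R ((norm (x i t))\<^sup>2 *\<^sub>R x k t - (x i t \<bullet> x k t) *\<^sub>R x i t))
     \<le> (\<Sum>k<N. (\<sigma> / real N) * 2)"
  proof (rule sum_norm_le)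
    fix k assume k: "k \<in> {..<N}"
    have nk: "norm (x k t) = 1" using nx1 assms k by auto
    have "norm ((norm (x i t))\<^sup>2 *\<^sub>R x k t - (x i t \<bullet> x k t) *\<^sub>R x i t) \<le>
          norm ((norm (x i t))\<^sup>2 *\<^sub>R x k t) + norm ((x i t \<bullet> x k t) *\<^sub>R x i t)"
      by (rule norm_triangle_ineq4)
    also have "\<dots> \<le> 1 + 1"
      using ni nk Cauchy_Schwarz_ineq2[of "x i t" "x k t"] by simp
    finally have "norm ((norm (x i t))\<^sup>2 *\<^sub>R x k t - (x i t \<bullet> x k t) *\<^sub>R x i t) \<le> 2" by simp
    then have "(\<sigma> / real N) * norm ((norm (x i t))\<^sup>2 *\<^sub>R x k t - (x i t \<bullet> x k t) *\<^sub>R x i t) \<le> (\<sigma> / real N) * 2"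
      by (rule mult_left_mono) (use sigma Npos in simp)
    then show "norm ((\<sigma> / real N) *\<^sub>R ((norm (x i t))\<^sup>2 *\<^sub>R x k t - (x i t \<bullet> x k t) *\<^sub>R x i t)) \<le> (\<sigma> / real N) * 2"
      using sigma Npos by simp
  qed
  have C': "(\<Sum>k<N. (\<sigma> / real N) * 2) = 2 * \<sigma>" using Npos by simp
  have "norm (f i t) \<le> real N * E0 + 2 * \<psi> 0 * V + 2 * \<sigma>"
    unfolding f_def vrhs_def
    using norm_triangle_ineq[of "- ((norm (v i t))\<^sup>2 / (norm (x i t))\<^sup>2) *\<^sub>R x i t + (\<Sum>j<N. (1 / real N) *\<^sub>R (psiR \<psi> (x i t) (x j t) (v j t) - \<psi> (norm (x i t - x j t)) *\<^sub>R v i t))"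
       "(\<Sum>k<N. (\<sigma> / real N) *\<^sub>R ((norm (x i t))\<^sup>2 *\<^sub>R x k t - (x i t \<bullet> x k t) *\<^sub>R x i t))"]
      norm_triangle_ineq[of "- ((norm (v i t))\<^sup>2 / (norm (x i t))\<^sup>2) *\<^sub>R x i t" "(\<Sum>j<N. (1 / real N) *\<^sub>R (psiR \<psi> (x i t) (x j t) (v j t) - \<psi> (norm (x i t - x j t)) *\<^sub>R v i t))"]
      A B B' C C' by linarith
  then show ?thesis unfolding Q_def .
qed

end

context sys begin

lemma conclusion:
  "(\<forall>i<N. \<exists>D B. (\<forall>t\<ge>0. (v i has_vector_derivative D t) (at t within {0..}))
                          \<and> (\<forall>t\<ge>0. norm (D t) \<le> B)) \<and>
         (\<forall>i<N. \<forall>j<N. \<exists>D B.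
           (\<forall>t\<ge>0. ((\<lambda>s. Rot (x j s) (x i s) *v v j s) has_vector_derivative D t) (at t within {0..}))
           \<and> (\<forall>t\<ge>0. norm (D t) \<le> B))"
proof (intro conjI allI impI)
  fix i assume i: "i < N"
  show "\<exists>D B. (\<forall>t\<ge>0. (v i has_vector_derivative D t) (at t within {0..})) \<and> (\<forall>t\<ge>0. norm (D t) \<le> B)"
    by (intro exI[of _ "f i"] exI[of _ Q]) (use vd f_bound i in auto)
next
  fix i j assume i: "i < N" and j: "j < N"
  define L where "L = max 1 (max V Q)"
  define D where "D t = dFr (x j t) (x i t) (v j t) (v j t) (v i t) (f j t)" for t
  show "\<exists>D B. (\<forall>t\<ge>0. ((\<lambda>s. Rot (x j s) (x i s) *v v j s) has_vector_derivative D t) (at t within {0..}))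
           \<and> (\<forall>t\<ge>0. norm (D t) \<le> B)"
  proof (intro exI[of _ D] exI[of _ "9*L^2 + 2*L^2/\<delta> + 8*L^2/\<delta>^2"] conjI allI impI)
    fix t :: real assume t: "t \<ge> 0"
    show "((\<lambda>s. Rot (x j s) (x i s) *v v j s) has_vector_derivative D t) (at t within {0..})"
    proof (rule has_vector_derivative_transform[where f = "\<lambda>s. Fr (x j s) (x i s) (v j s)"])
      show "t \<in> {0..}" using t by simp
      fix s :: real assume "s \<in> {0..}"
      then have s: "s \<ge> 0" by simp
      show "Rot (x j s) (x i s) *v v j s = Fr (x j s) (x i s) (v j s)"
        by (rule rot_F[OF nx1[OF s j] nx1[OF s i] cdelta(2)[OF s i j]])
    next
      have c: "1 + x j t \<bullet> x i t \<noteq> 0" using cdelta(1)[OF t i j] delta_pos by linarith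
      show "((\<lambda>s. Fr (x j s) (x i s) (v j s)) has_vector_derivative D t) (at t within {0..})"
        unfolding D_def by (rule Fr_deriv[OF xd[OF j t] xd[OF i t] vd[OF j t] c])
    qed
  next
    fix t :: real assume t: "t \<ge> 0"
    have L1: "1 \<le> L" "V \<le> L" "Q \<le> L" unfolding L_def by auto
    show "norm (D t) \<le> 9*L^2 + 2*L^2/\<delta> + 8*L^2/\<delta>^2"
      unfolding D_def
    proof (rule dFr_bound[OF nx1[OF t j] nx1[OF t i]])
      show "norm (v j t) \<le> L" using vnorm[OF t j] L1 by linarith
      show "norm (v j t) \<le> L" using vnorm[OF t j] L1 by linarith
      show "norm (v i t) \<le> L" using vnorm[OF t i] L1 by linarith
      show "norm (f j t) \<le> L" using f_bound[OF t j] L1 by linarith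
      show "1 \<le> L" by (rule L1)
      show "0 < \<delta>" by (rule delta_pos)
      show "\<delta> \<le> 1 + x j t \<bullet> x i t" by (rule cdelta(1)[OF t i j])
    qed
  qed
qed

end

theorem proposition4p6:
  fixes N :: nat and \<sigma> :: real and \<psi> \<psi>' :: "real \<Rightarrow> real"
    and x v :: "nat \<Rightarrow> real \<Rightarrow> real^3"
  assumes N: "N \<ge> 1" and sigma: "\<sigma> > 0"
    and psi_nonneg: "\<forall>r\<in>{0..2}. \<psi> r \<ge> 0"
    and psi_decr: "antimono_on {0..2} \<psi>"
    and psi_deriv: "\<forall>r\<in>{0..2}. (\<psi> has_real_derivative \<psi>' r) (at r within {0..2})"
    and psi_C1: "continuous_on {0..2} \<psi>'"
    and psi2: "\<psi> 2 = 0" and dpsi2: "\<psi>' 2 < 0"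
    and xdot: "\<forall>i<N. \<forall>t\<ge>0. (x i has_vector_derivative v i t) (at t within {0..})"
    and vdot: "\<forall>i<N. \<forall>t\<ge>0. (v i has_vector_derivative
                  vrhs N \<sigma> \<psi> (\<lambda>k. x k t) (\<lambda>k. v k t) i) (at t within {0..})"
    and init_norm: "\<forall>i<N. norm (x i 0) = 1"
    and init_tan: "\<forall>i<N. v i 0 \<bullet> x i 0 = 0"
    and energy_small: "2 * \<sigma> > (real N)\<^sup>2 * energy N \<sigma> (\<lambda>k. x k 0) (\<lambda>k. v k 0)"
  shows "(\<forall>i<N. \<exists>D B. (\<forall>t\<ge>0. (v i has_vector_derivative D t) (at t within {0..}))
                          \<and> (\<forall>t\<ge>0. norm (D t) \<le> B)) \<and>
         (\<forall>i<N. \<forall>j<N. \<exists>D B.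
           (\<forall>t\<ge>0. ((\<lambda>s. Rot (x j s) (x i s) *v v j s) has_vector_derivative D t) (at t within {0..}))
           \<and> (\<forall>t\<ge>0. norm (D t) \<le> B))"
proof -
  interpret S: sys N \<sigma> \<psi> x v
    by (rule sys.intro) (fact N sigma psi_nonneg psi_decr psi2 xdot vdot init_norm init_tan energy_small)+
  show ?thesis by (rule S.conclusion)
qed


end
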